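(* Let $w$ be a word and $TG(w) = (V, E_1, \dots, E_T)$ the temporal graph it represents, and suppose $TG(w)$ is connected in every timestep. Then for every edge $(v_x, v_y)$ of $G(w)$ and every $t \in [1, T - \min(d(v_x), d(v_y))]$, we have $(v_x, v_y) \in E_t \cup E_{t+1} \cup \dots \cup E_{t + \min(d(v_x), d(v_y))}$.
   Context: Words are over $\Sigma=\{1,\dots,n\}$; $w[i]$ is the $i$-th letter, $w[i,j]$ the factor $w[i]\cdots w[j]$, $\mathrm{letters}(u)$ the set of symbols occurring in $u$, $\pi_{\mathcal S}(w)$ the subsequence of $w$ of all occurrences of symbols in $\mathcal S$. Symbols $x,y$ alternate in $w$ if $\pi_{\{x,y\}}(w) \in \{(xy)^k, (xy)^kx, (yx)^k, (yx)^ky : k \ge 0\}$. $G(w)$ has vertex set $V=\{v_1,\dots,v_n\}$ and undirected edge $(v_x,v_y)$ iff $x\neq y$ alternate in $w$; $d(v)$ is the degree of $v$ in $G(w)$. Start points: $S_1=1$, and $S_i$ is the least index $j>S_{i-1}$ with $w[j] \in \mathrm{letters}(w[S_{i-1},j-1])$; $S_1<\dots<S_T$ are all start points. The $t$-th timestep factor is $w[S_t,S_{t+1}-1]$ ($t<T$) or $w[S_T,|w|]$ ($t=T$). $TG(w)=(V,E_1,\dots,E_T)$ with $E_t$ the set of edges $(v_x,v_y)$ of $G(w)$ with $x$ or $y$ occurring in the $t$-th timestep factor. Connected in every timestep means $(V,E_t)$ is connected for all $t$. *)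

theory Defs
  imports Main
begin

(* Words are lists of nat; positions are 1-based as in the paper: w[i] = w ! (i - 1). *)

definition letter :: "nat list \<Rightarrow> nat \<Rightarrow> nat" where
  "letter w i = w ! (i - 1)"

definition letters_fac :: "nat list \<Rightarrow> nat \<Rightarrow> nat \<Rightarrow> nat set" where
  "letters_fac w i j = {letter w k | k. i \<le> k \<and> k \<le> j}"

definition alternate :: "nat list \<Rightarrow> nat \<Rightarrow> nat \<Rightarrow> bool" where
  "alternate w x y \<longleftrightarrow>
     (let p = filter (\<lambda>c. c = x \<or> c = y) w in
      \<exists>k. p = concat (replicate k [x, y]) \<or> p = concat (replicate k [x, y]) @ [x]
         \<or> p = concat (replicate k [y, x]) \<or> p = concat (replicate k [y, x]) @ [y])"

(* vertex v_x is identified with x; V = {1..n} *)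
definition Gedge :: "nat \<Rightarrow> nat list \<Rightarrow> nat \<Rightarrow> nat \<Rightarrow> bool" where
  "Gedge n w x y \<longleftrightarrow> x \<in> {1..n} \<and> y \<in> {1..n} \<and> x \<noteq> y \<and> alternate w x y"

definition deg :: "nat \<Rightarrow> nat list \<Rightarrow> nat \<Rightarrow> nat" where
  "deg n w x = card {y \<in> {1..n}. Gedge n w x y}"

inductive start_point :: "nat list \<Rightarrow> nat \<Rightarrow> bool" for w where
  first: "w \<noteq> [] \<Longrightarrow> start_point w 1"
| step: "start_point w s \<Longrightarrow> s < j \<Longrightarrow> j \<le> length w
         \<Longrightarrow> letter w j \<in> letters_fac w s (j - 1)
         \<Longrightarrow> (\<forall>j'. s < j' \<and> j' < j \<longrightarrow> letter w j' \<notin> letters_fac w s (j' - 1))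
         \<Longrightarrow> start_point w j"

definition num_steps :: "nat list \<Rightarrow> nat" where
  "num_steps w = card {s. start_point w s}"

definition S :: "nat list \<Rightarrow> nat \<Rightarrow> nat" where
  "S w t = sorted_list_of_set {s. start_point w s} ! (t - 1)"

definition step_letters :: "nat list \<Rightarrow> nat \<Rightarrow> nat set" where
  "step_letters w t =
     (if t < num_steps w then letters_fac w (S w t) (S w (Suc t) - 1)
      else letters_fac w (S w (num_steps w)) (length w))"

definition Eedge :: "nat \<Rightarrow> nat list \<Rightarrow> nat \<Rightarrow> nat \<Rightarrow> nat \<Rightarrow> bool" where
  "Eedge n w t x y \<longleftrightarrow> Gedge n w x y \<and> (x \<in> step_letters w t \<or> y \<in> step_letters w t)"

definition connected_every_step :: "nat \<Rightarrow> nat list \<Rightarrow> bool" where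
  "connected_every_step n w \<longleftrightarrow>
     (\<forall>t \<in> {1..num_steps w}. \<forall>a \<in> {1..n}. \<forall>b \<in> {1..n}. (Eedge n w t)\<^sup>*\<^sup>* a b)"

end

theory Submission
  imports Defs
begin

lemma concat_rep_nth:
  "i < 2 * k \<Longrightarrow> concat (replicate k [a, b]) ! i = (if even i then a else b)"
proof (induction k arbitrary: i)
  case 0 then show ?case by simp
next
  case (Suc k)
  show ?case
  proof (cases i)
    case 0 then show ?thesis by simp
  next
    case (Suc i')
    then show ?thesis
    proof (cases i')
      case 0 then show ?thesis using Suc by simp
    next
      case (Suc i'')
      then show ?thesis using \<open>i = Suc i'\<close> Suc.IH[of i''] Suc.prems by auto
    qed
  qed
qed

lemma alt_list_nth:
  assumes "L = concat (replicate k [a, b]) \<or> L = concat (replicate k [a, b]) @ [a]"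
  and "i < length L"
  shows "L ! i = (if even i then a else b)"
  using assms(1)
proof
  assume "L = concat (replicate k [a, b])"
  then show ?thesis using assms(2) concat_rep_nth[of i k a b]
    by (simp add: length_concat sum_list_replicate)
next
  assume h: "L = concat (replicate k [a, b]) @ [a]"
  have l: "length (concat (replicate k [a, b])) = 2 * k"
    by (simp add: length_concat sum_list_replicate)
  show ?thesis
  proof (cases "i < 2 * k")
    case True then show ?thesis using h l concat_rep_nth[of i k a b] by (simp add: nth_append)
  next
    case False then have "i = 2 * k" using assms(2) h l by simp
    then show ?thesis using h l by (simp add: nth_append)
  qed
qed

lemma alternate_no_adj:
  assumes "alternate w x y" "x \<noteq> y"
    and "Suc i < length (filter (\<lambda>c. c = x \<or> c = y) w)"
  shows "filter (\<lambda>c. c = x \<or> c = y) w ! i \<noteq> filter (\<lambda>c. c = x \<or> c = y) w ! Suc i"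
proof -
  define L where "L = filter (\<lambda>c. c = x \<or> c = y) w"
  obtain k where "L = concat (replicate k [x, y]) \<or> L = concat (replicate k [x, y]) @ [x]
         \<or> L = concat (replicate k [y, x]) \<or> L = concat (replicate k [y, x]) @ [y]"
    using assms(1) unfolding alternate_def L_def Let_def by blast
  then have "(\<forall>j<length L. L ! j = (if even j then x else y)) \<or> (\<forall>j<length L. L ! j = (if even j then y else x))"
    using alt_list_nth by metis
  then show ?thesis
  proof
    assume h: "\<forall>j<length L. L ! j = (if even j then x else y)"
    show ?thesis using h[rule_format, of i] h[rule_format, of "Suc i"] assms(2,3) unfolding L_def[symmetric] by auto
  next
    assume h: "\<forall>j<length L. L ! j = (if even j then y else x)"
    show ?thesis using h[rule_format, of i] h[rule_format, of "Suc i"] assms(2,3) unfolding L_def[symmetric] by auto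
  qed
qed

lemma rep_nth1: "(z # replicate m z @ d) ! m = z"
  by (induction m) auto

lemma alternate_between:
  assumes "alternate w x z" "x \<noteq> z" "i < j" "j < length w" "w ! i = z" "w ! j = z"
  shows "\<exists>r. i < r \<and> r < j \<and> w ! r = x"
proof (rule ccontr)
  assume nx: "\<not> ?thesis"
  define P where "P = (\<lambda>c. c = x \<or> c = z)"
  define a where "a = take i w"
  define b where "b = drop (Suc i) (take j w)"
  define c where "c = drop (Suc j) w"
  have tj: "take j w = a @ [z] @ b"
  proof -
    have "take j w = take (Suc i) (take j w) @ drop (Suc i) (take j w)" by (rule append_take_drop_id[symmetric])
    moreover have "take (Suc i) (take j w) = a @ [z]"
      using assms(3,4,5) unfolding a_def by (simp add: min_def take_Suc_conv_app_nth)
    ultimately show ?thesis unfolding b_def by simp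
  qed
  have wd: "w = a @ z # b @ z # c"
    using id_take_nth_drop[OF assms(4)] tj assms(6) unfolding c_def by simp
  have bz: "\<forall>e\<in>set b. P e \<longrightarrow> e = z"
  proof
    fix e assume "e \<in> set b"
    then obtain k where k: "k < length b" "b ! k = e" by (auto simp: in_set_conv_nth)
    have "e = w ! (Suc i + k)" using k assms(3,4) unfolding b_def by simp
    moreover have "Suc i + k < j" using k assms(3,4) unfolding b_def by simp
    ultimately show "P e \<longrightarrow> e = z" using nx unfolding P_def by auto
  qed
  have fb: "filter P b = replicate (length (filter P b)) z"
    using bz by (induction b) auto
  define m where "m = length (filter P b)"
  have Pz: "P z" unfolding P_def by simp
  have F: "filter P w = filter P a @ z # replicate m z @ z # filter P c"
    using wd Pz fb unfolding m_def by (metis filter.simps(2) filter_append)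
  define i0 where "i0 = length (filter P a) + m"
  have "Suc i0 < length (filter P w)" unfolding F i0_def by simp
  moreover have "filter P w ! i0 = z" unfolding F i0_def
    by (simp only: nth_append_length_plus rep_nth1)
  moreover have "filter P w ! Suc i0 = z" unfolding F i0_def
    by (simp add: nth_append nth_Cons' )
  ultimately show False using alternate_no_adj[OF assms(1,2), of i0] unfolding P_def by simp
qed

lemma sp_bounds: "start_point w s \<Longrightarrow> 1 \<le> s \<and> s \<le> length w"
  by (induction rule: start_point.induct) (auto simp: Suc_le_eq)

lemma sp_finite: "finite {s. start_point w s}"
  by (rule finite_subset[of _ "{1..length w}"]) (auto dest: sp_bounds)

lemma len_SL: "length (sorted_list_of_set {s. start_point w s}) = num_steps w"
  unfolding num_steps_def using sp_finite by simp

lemma S_mem: "1 \<le> k \<Longrightarrow> k \<le> num_steps w \<Longrightarrow> start_point w (S w k)"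
proof -
  assume a: "1 \<le> k" "k \<le> num_steps w"
  have "S w k \<in> set (sorted_list_of_set {s. start_point w s})"
    unfolding S_def using a len_SL[of w] by (intro nth_mem) simp
  then show ?thesis using sp_finite by simp
qed

lemma S_bounds: "1 \<le> k \<Longrightarrow> k \<le> num_steps w \<Longrightarrow> 1 \<le> S w k \<and> S w k \<le> length w"
  using S_mem sp_bounds by blast

lemma S_mono: "1 \<le> k \<Longrightarrow> k < k' \<Longrightarrow> k' \<le> num_steps w \<Longrightarrow> S w k < S w k'"
proof -
  assume a: "1 \<le> k" "k < k'" "k' \<le> num_steps w"
  have "sorted_wrt (<) (sorted_list_of_set {s. start_point w s})"
    by (rule strict_sorted_list_of_set)
  from sorted_wrt_nth_less[OF this, of "k - 1" "k' - 1"]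
  show ?thesis unfolding S_def using a len_SL[of w] by auto
qed

definition ee :: "nat list \<Rightarrow> nat \<Rightarrow> nat" where
  "ee w k = (if k < num_steps w then S w (Suc k) - 1 else length w)"

lemma SL_eq: "1 \<le> k \<Longrightarrow> k \<le> num_steps w \<Longrightarrow> step_letters w k = letters_fac w (S w k) (ee w k)"
  unfolding step_letters_def ee_def by auto

lemma ee_bound: "1 \<le> k \<Longrightarrow> k \<le> num_steps w \<Longrightarrow> ee w k \<le> length w"
  unfolding ee_def using S_bounds[of "Suc k" w] by auto

lemma ee_less: "1 \<le> k \<Longrightarrow> k < k' \<Longrightarrow> k' \<le> num_steps w \<Longrightarrow> ee w k < S w k'"
proof -
  assume a: "1 \<le> k" "k < k'" "k' \<le> num_steps w"
  have "S w (Suc k) \<le> S w k'"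
    using S_mono[of "Suc k" k' w] a by (cases "Suc k = k'") auto
  moreover have "1 \<le> S w (Suc k)" using S_bounds[of "Suc k" w] a by auto
  ultimately show ?thesis unfolding ee_def using a by auto
qed

lemma cover:
  assumes "1 \<le> k1" "k1 \<le> k2" "k2 \<le> num_steps w" "S w k1 \<le> r" "r \<le> ee w k2"
  shows "\<exists>m. k1 \<le> m \<and> m \<le> k2 \<and> S w m \<le> r \<and> r \<le> ee w m"
  using assms
proof (induction k2 arbitrary: r)
  case 0 then show ?case by simp
next
  case (Suc k)
  show ?case
  proof (cases "k1 = Suc k")
    case True then show ?thesis using Suc.prems by auto
  next
    case False
    then have k: "k1 \<le> k" "k < num_steps w" using Suc.prems by auto
    show ?thesis
    proof (cases "r \<le> ee w k")
      case True
      then show ?thesis using Suc.IH[of r] k Suc.prems by fastforce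
    next
      case False
      then have "S w (Suc k) \<le> r" using k unfolding ee_def by auto
      then show ?thesis using Suc.prems by auto
    qed
  qed
qed

lemma occ:
  assumes conn: "connected_every_step n w"
    and g0: "Gedge n w x y0"
    and t: "1 \<le> t" "t + deg n w x \<le> num_steps w"
  shows "\<exists>s. t \<le> s \<and> s \<le> t + deg n w x \<and> x \<in> step_letters w s"
proof (rule ccontr)
  assume nx: "\<not> ?thesis"
  define d where "d = deg n w x"
  define K where "K = {t..t+d}"
  define N where "N = {y \<in> {1..n}. Gedge n w x y}"
  have xn: "x \<in> {1..n}" "y0 \<in> {1..n}" "x \<noteq> y0" using g0 unfolding Gedge_def by auto
  have ex: "\<forall>k\<in>K. \<exists>p. S w k \<le> p \<and> p \<le> ee w k \<and> Gedge n w x (letter w p)"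
  proof
    fix k assume kK: "k \<in> K"
    then have k: "1 \<le> k" "k \<le> num_steps w" using t unfolding K_def d_def by auto
    have xk: "x \<notin> step_letters w k" using nx kK unfolding K_def d_def by auto
    have "(Eedge n w k)\<^sup>*\<^sup>* x y0" using conn k xn unfolding connected_every_step_def by auto
    then obtain z where "Eedge n w k x z" using xn(3) by (cases rule: converse_rtranclpE) auto
    then have z: "Gedge n w x z" "z \<in> step_letters w k" using xk unfolding Eedge_def by auto
    then show "\<exists>p. S w k \<le> p \<and> p \<le> ee w k \<and> Gedge n w x (letter w p)"
      using SL_eq[OF k] unfolding letters_fac_def by auto
  qed
  from bchoice[OF ex] obtain pf where pf0: "\<forall>k\<in>K. S w k \<le> pf k \<and> pf k \<le> ee w k \<and> Gedge n w x (letter w (pf k))"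
    by blast
  have pf: "\<And>k. k \<in> K \<Longrightarrow> S w k \<le> pf k \<and> pf k \<le> ee w k \<and> Gedge n w x (letter w (pf k))"
    using pf0 by blast
  have img: "(\<lambda>k. letter w (pf k)) ` K \<subseteq> N"
    using pf unfolding N_def Gedge_def by auto
  have noinj: "False" if kk: "k \<in> K" "k' \<in> K" "k < k'" "letter w (pf k) = letter w (pf k')" for k k'
  proof -
    have k: "1 \<le> k" "k' \<le> num_steps w" using kk t unfolding K_def d_def by auto
    define z where "z = letter w (pf k)"
    have gz: "Gedge n w x z" using pf kk unfolding z_def by auto
    have p1: "1 \<le> pf k" using pf[OF kk(1)] S_bounds[of k w] k kk by auto
    have p2: "pf k < pf k'" using pf[OF kk(1)] pf[OF kk(2)] ee_less[of k k' w] k kk by auto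
    have p3: "pf k' \<le> length w" using pf[OF kk(2)] ee_bound[of k' w] k kk by auto
    have alt: "alternate w x z" "x \<noteq> z" using gz unfolding Gedge_def by auto
    have wz1: "w ! (pf k - 1) = z" unfolding z_def letter_def by simp
    have wz2: "w ! (pf k' - 1) = z" using kk(4) unfolding z_def letter_def by simp
    have ij: "pf k - 1 < pf k' - 1" "pf k' - 1 < length w" using p1 p2 p3 by linarith+
    obtain r where r: "pf k - 1 < r" "r < pf k' - 1" "w ! r = x"
      using alternate_between[OF alt ij wz1 wz2] by blast
    have "S w k \<le> Suc r" "Suc r \<le> ee w k'" using r pf[OF kk(1)] pf[OF kk(2)] p1 by auto
    then obtain m where m: "k \<le> m" "m \<le> k'" "S w m \<le> Suc r" "Suc r \<le> ee w m"
      using cover[of k k' w "Suc r"] k kk by auto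
    have mK: "m \<in> K" using m kk unfolding K_def by auto
    have m1: "1 \<le> m" "m \<le> num_steps w" using m k by auto
    have "letter w (Suc r) = x" using r(3) unfolding letter_def by simp
    then have "x \<in> letters_fac w (S w m) (ee w m)" using m(3,4) unfolding letters_fac_def by blast
    then have "x \<in> step_letters w m" using SL_eq[OF m1] by simp
    then show False using nx mK unfolding K_def d_def by auto
  qed
  have "inj_on (\<lambda>k. letter w (pf k)) K"
  proof (rule inj_onI)
    fix k k' assume "k \<in> K" "k' \<in> K" "letter w (pf k) = letter w (pf k')"
    then show "k = k'" using noinj by (metis linorder_neqE_nat)
  qed
  then have "card K \<le> card N"
    using img by (intro card_inj_on_le) (auto simp: N_def)
  moreover have "card N = d" unfolding N_def d_def deg_def by simp
  moreover have "card K = Suc d" unfolding K_def by simp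
  ultimately show False by simp
qed

lemma Gedge_sym: "Gedge n w x y \<Longrightarrow> Gedge n w y x"
proof -
  assume g: "Gedge n w x y"
  have F: "filter (\<lambda>c. c = y \<or> c = x) w = filter (\<lambda>c. c = x \<or> c = y) w"
    by (rule filter_cong) auto
  have "alternate w y x" using g unfolding Gedge_def alternate_def Let_def F by blast
  then show ?thesis using g unfolding Gedge_def by auto
qed

theorem corollary2:
  fixes n :: nat and w :: "nat list"
  assumes "set w \<subseteq> {1..n}"
    and "connected_every_step n w"
    and "Gedge n w x y"
    and "1 \<le> t" and "t \<le> num_steps w - min (deg n w x) (deg n w y)"
  shows "\<exists>s. t \<le> s \<and> s \<le> t + min (deg n w x) (deg n w y) \<and> Eedge n w s x y"
proof -
  have tm: "t + min (deg n w x) (deg n w y) \<le> num_steps w" using assms(4,5) by linarith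
  show ?thesis
proof (cases "deg n w x \<le> deg n w y")
  case True
  then obtain s where s: "t \<le> s" "s \<le> t + deg n w x" "x \<in> step_letters w s"
    using occ[OF assms(2,3) assms(4)] tm by auto
  then show ?thesis using True assms(3) unfolding Eedge_def by (intro exI[of _ s]) auto
next
  case False
  then obtain s where s: "t \<le> s" "s \<le> t + deg n w y" "y \<in> step_letters w s"
    using occ[OF assms(2) Gedge_sym[OF assms(3)] assms(4)] tm by auto
  then show ?thesis using False assms(3) unfolding Eedge_def by (intro exI[of _ s]) auto
qed
qed

end
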